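(* Let $\beta,\gamma\ge0$ with $\beta+\gamma>0$. Let $\mu_{\beta,\gamma}$ be the unique strictly increasing continuous function on $[0,T]$, continuously differentiable on $(0,T]$, with $\mu_{\beta,\gamma}(0)=0$ and $\mu'_{\beta,\gamma}(s)=\frac{\gamma^2}{2\mu_{\beta,\gamma}(s)}+\frac{\sqrt2}{2}\beta$ for $s\in(0,T]$; let $\nu_{\beta,\gamma}(s):=\int_0^s\big[\frac{\sqrt2}{2}\beta\mu_{\beta,\gamma}(r)+\frac{\gamma^2}{2}\big(1+\frac{\sqrt2}{\mu_{\beta,\gamma}(r)}\big)\big]dr$; let $\varphi(s,x):=(x+e)\exp\big(\mu_{\beta,\gamma}(s)\sqrt{2\ln(x+e)}+\nu_{\beta,\gamma}(s)\big)$ and $\psi(x,\mu):=x\exp(\mu\sqrt{2\ln(1+x)})$. Then there exists a constant $K>0$ depending only on $(\beta,\gamma,T)$ such that for all $(s,x)\in[0,T]\times\mathbb R_+$, $$\psi(x,\mu_{\beta,\gamma}(s))\le\varphi(s,x)\le K\psi(x,\mu_{\beta,\gamma}(s))+K.$$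
   Context: $T>0$ is fixed. *)

theory Defs
  imports "HOL-Analysis.Analysis"
begin

definition is_mu :: "real \<Rightarrow> real \<Rightarrow> real \<Rightarrow> (real \<Rightarrow> real) \<Rightarrow> bool" where
  "is_mu \<beta> \<gamma> T \<mu> \<longleftrightarrow>
     continuous_on {0..T} \<mu> \<and>
     strict_mono_on {0..T} \<mu> \<and>
     \<mu> 0 = 0 \<and>
     (\<forall>s\<in>{0<..T}. (\<mu> has_real_derivative
          (\<gamma>^2 / (2 * \<mu> s) + sqrt 2 / 2 * \<beta>)) (at s within {0..T})) \<and>
     continuous_on {0<..T} (\<lambda>s. \<gamma>^2 / (2 * \<mu> s) + sqrt 2 / 2 * \<beta>)"

definition nu_fun :: "real \<Rightarrow> real \<Rightarrow> (real \<Rightarrow> real) \<Rightarrow> real \<Rightarrow> real" where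
  "nu_fun \<beta> \<gamma> \<mu> s =
     integral {0..s} (\<lambda>r. sqrt 2 / 2 * \<beta> * \<mu> r + \<gamma>^2 / 2 * (1 + sqrt 2 / \<mu> r))"

definition phi_fun :: "real \<Rightarrow> real \<Rightarrow> (real \<Rightarrow> real) \<Rightarrow> real \<Rightarrow> real \<Rightarrow> real" where
  "phi_fun \<beta> \<gamma> \<mu> s x =
     (x + exp 1) * exp (\<mu> s * sqrt (2 * ln (x + exp 1)) + nu_fun \<beta> \<gamma> \<mu> s)"

definition psi_fun :: "real \<Rightarrow> real \<Rightarrow> real" where
  "psi_fun x m = x * exp (m * sqrt (2 * ln (1 + x)))"

end

theory Submission
  imports Defs
begin

lemma sqrt_sub: "0 \<le> a \<Longrightarrow> 0 \<le> b \<Longrightarrow> sqrt (a + b) \<le> sqrt a + sqrt b"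
proof -
  assume a: "0 \<le> a" "0 \<le> b"
  have "(sqrt (a+b))^2 \<le> (sqrt a + sqrt b)^2"
    using a by (simp add: power2_eq_square algebra_simps real_sqrt_mult[symmetric])
  then have "a + b \<le> (sqrt a + sqrt b)^2" using a by simp
  then show ?thesis using a by (intro real_le_lsqrt) auto
qed

lemma key_ineq:
  fixes m n M N x :: real
  assumes m: "0 \<le> m" "m \<le> M" and n: "0 \<le> n" "n \<le> N" and x: "0 \<le> x"
  shows "x * exp (m * sqrt (2 * ln (1 + x))) \<le> (x + exp 1) * exp (m * sqrt (2 * ln (x + exp 1)) + n)"
    and "(x + exp 1) * exp (m * sqrt (2 * ln (x + exp 1)) + n)
          \<le> (exp (2*M + N) * (1 + exp 1) * (1 + exp (2*M))) * (x * exp (m * sqrt (2 * ln (1 + x))))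
            + exp (2*M + N) * (1 + exp 1) * (1 + exp (2*M))"
proof -
  have e1: "1 \<le> exp (1::real)" by simp
  have l1: "ln (1 + x) \<le> ln (x + exp 1)" using x e1 by (subst ln_le_cancel_iff) (auto intro: add_nonneg_pos)
  have l0: "0 \<le> ln (1 + x)" using x by simp
  have s1: "sqrt (2 * ln (1 + x)) \<le> sqrt (2 * ln (x + exp 1))" using l1 by simp
  have "m * sqrt (2 * ln (1 + x)) \<le> m * sqrt (2 * ln (x + exp 1)) + n"
    using mult_left_mono[OF s1 m(1)] n by linarith
  then have "exp (m * sqrt (2 * ln (1 + x))) \<le> exp (m * sqrt (2 * ln (x + exp 1)) + n)" by simp
  moreover have "x \<le> x + exp 1" by simp
  ultimately show "x * exp (m * sqrt (2 * ln (1 + x))) \<le> (x + exp 1) * exp (m * sqrt (2 * ln (x + exp 1)) + n)"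
    using x by (intro mult_mono) auto
  define E where "E = exp (m * sqrt (2 * ln (1 + x)))"
  define C where "C = exp (2*M + N)"
  have Epos: "0 < E" unfolding E_def by simp
  have "x * 1 \<le> x * exp 1" using x e1 by (intro mult_left_mono) auto
  then have "x + exp 1 \<le> exp 1 * (1 + x)" by (simp add: algebra_simps)
  then have "ln (x + exp 1) \<le> ln (exp 1 * (1 + x))" using x by (subst ln_le_cancel_iff) (auto intro: add_nonneg_pos)
  also have "\<dots> = 1 + ln (1 + x)" using x by (simp add: ln_mult)
  finally have "2 * ln (x + exp 1) \<le> 2 + 2 * ln (1 + x)" by simp
  then have "sqrt (2 * ln (x + exp 1)) \<le> sqrt (2 + 2 * ln (1 + x))" by simp
  also have "\<dots> \<le> sqrt 2 + sqrt (2 * ln (1 + x))" using l0 by (intro sqrt_sub) auto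
  also have "\<dots> \<le> 2 + sqrt (2 * ln (1 + x))" using sqrt2_less_2 by simp
  finally have "m * sqrt (2 * ln (x + exp 1)) \<le> m * (2 + sqrt (2 * ln (1 + x)))"
    using m(1) by (rule mult_left_mono)
  then have "m * sqrt (2 * ln (x + exp 1)) + n \<le> (2*M + N) + m * sqrt (2 * ln (1 + x))"
    using m n by (simp add: algebra_simps)
  then have ex: "exp (m * sqrt (2 * ln (x + exp 1)) + n) \<le> C * E"
    unfolding C_def E_def by (simp flip: exp_add)
  have Cpos: "0 < C" unfolding C_def by simp
  have eE: "exp 1 * E \<le> exp 1 * (x * E) + exp 1 * exp (2*M)"
  proof (cases "x \<le> 1")
    case True
    have "ln (1 + x) \<le> 1" using True x ln_le_minus_one[of "1+x"] by simp
    then have "sqrt (2 * ln (1 + x)) \<le> sqrt 2" by simp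
    then have "sqrt (2 * ln (1 + x)) \<le> 2" using sqrt2_less_2 by linarith
    then have "m * sqrt (2 * ln (1 + x)) \<le> M * 2" using m l0
      by (intro mult_mono) auto
    then have "E \<le> exp (2 * M)" unfolding E_def by simp
    then show ?thesis using x Epos by (simp add: mult_left_mono add_increasing)
  next
    case False
    then have "E \<le> x * E" using Epos by simp
    then show ?thesis by (simp add: add_increasing2)
  qed
  have "(x + exp 1) * exp (m * sqrt (2 * ln (x + exp 1)) + n) \<le> (x + exp 1) * (C * E)"
    using ex x e1 by (intro mult_left_mono) auto
  also have "\<dots> = C * (x * E + exp 1 * E)" by (simp add: algebra_simps)
  also have "\<dots> \<le> C * (x * E + exp 1 * (x * E) + exp 1 * exp (2*M))"
    using eE Cpos by (intro mult_left_mono) auto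
  also have "\<dots> \<le> (C * (1 + exp 1) * (1 + exp (2*M))) * (x * E) + C * (1 + exp 1) * (1 + exp (2*M))"
  proof -
    have xE: "0 \<le> x * E" using x Epos by simp
    have a: "x * E + exp 1 * (x * E) = (1 + exp 1) * (x * E)" by (simp add: algebra_simps)
    have b: "(1 + exp 1) * (x * E) \<le> (1 + exp 1) * (1 + exp (2*M)) * (x * E)"
      using xE by (intro mult_right_mono) (auto simp: add_pos_pos)
    have c: "exp 1 * exp (2*M) \<le> (1 + exp 1) * (1 + exp (2*M))"
      by (simp add: algebra_simps add_increasing)
    have "x * E + exp 1 * (x * E) + exp 1 * exp (2*M) \<le> (1 + exp 1) * (1 + exp (2*M)) * (x * E) + (1 + exp 1) * (1 + exp (2*M))"
      using a b c by linarith
    then have "C * (x * E + exp 1 * (x * E) + exp 1 * exp (2*M)) \<le> C * ((1 + exp 1) * (1 + exp (2*M)) * (x * E) + (1 + exp 1) * (1 + exp (2*M)))"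
      using Cpos by (intro mult_left_mono) auto
    then show ?thesis by (simp add: algebra_simps)
  qed
  finally show "(x + exp 1) * exp (m * sqrt (2 * ln (x + exp 1)) + n)
          \<le> (exp (2*M + N) * (1 + exp 1) * (1 + exp (2*M))) * (x * exp (m * sqrt (2 * ln (1 + x))))
            + exp (2*M + N) * (1 + exp 1) * (1 + exp (2*M))"
    unfolding C_def E_def .
qed

theorem proposition3p4:
  fixes \<beta> \<gamma> T :: real and \<mu> :: "real \<Rightarrow> real"
  assumes "T > 0" and "\<beta> \<ge> 0" and "\<gamma> \<ge> 0" and "\<beta> + \<gamma> > 0"
    and "is_mu \<beta> \<gamma> T \<mu>"
  shows "\<exists>K>0. \<forall>s\<in>{0..T}. \<forall>x\<ge>0.
           psi_fun x (\<mu> s) \<le> phi_fun \<beta> \<gamma> \<mu> s x \<and>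
           phi_fun \<beta> \<gamma> \<mu> s x \<le> K * psi_fun x (\<mu> s) + K"
proof -
  have cont: "continuous_on {0..T} \<mu>" and sm: "strict_mono_on {0..T} \<mu>" and m0: "\<mu> 0 = 0"
    using assms(5) unfolding is_mu_def by auto
  have mpos: "0 < \<mu> s" if "s \<in> {0<..T}" for s
    using sm m0 that assms(1) unfolding strict_mono_on_def by (metis atLeastAtMost_iff greaterThanAtMost_iff less_eq_real_def)
  have mnn: "0 \<le> \<mu> s" if "s \<in> {0..T}" for s
    using mpos[of s] that m0 by (cases "s = 0") auto
  have mle: "\<mu> s \<le> \<mu> T" if "s \<in> {0..T}" for s
    using sm that assms(1) unfolding strict_mono_on_def
    by (cases "s = T") (auto intro: less_imp_le)
  define f where "f = (\<lambda>r. sqrt 2 / 2 * \<beta> * \<mu> r + \<gamma>^2 / 2 * (1 + sqrt 2 / \<mu> r))"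
  have fnn: "0 \<le> f r" if "r \<in> {0..T}" for r
    using mnn[OF that] assms(2) unfolding f_def by (intro add_nonneg_nonneg) auto
  have nu: "nu_fun \<beta> \<gamma> \<mu> s = integral {0..s} f" for s
    unfolding nu_fun_def f_def ..
  define N where "N = max 0 (integral {0..T} f)"
  have nunn: "0 \<le> nu_fun \<beta> \<gamma> \<mu> s" if "s \<in> {0..T}" for s
  proof (cases "f integrable_on {0..s}")
    case True
    then show ?thesis unfolding nu using that fnn by (intro integral_nonneg) auto
  next
    case False
    then show ?thesis unfolding nu by (simp add: not_integrable_integral)
  qed
  have nule: "nu_fun \<beta> \<gamma> \<mu> s \<le> N" if s: "s \<in> {0..T}" for s
  proof (cases "f integrable_on {0..T}")
    case True
    then have "f integrable_on {0..s}" using s by (intro integrable_on_subinterval[OF True]) auto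
    then have "integral {0..s} f \<le> integral {0..T} f"
      using True s fnn by (intro integral_subset_le) auto
    then show ?thesis unfolding nu N_def by simp
  next
    case False
    show ?thesis
    proof (cases "s = 0")
      case True then show ?thesis unfolding nu N_def by simp
    next
      case s0: False
      have "continuous_on {s..T} f"
        unfolding f_def using s s0
      proof (intro continuous_intros continuous_on_subset[OF cont] ballI)
        show "{s..T} \<subseteq> {0..T}" using s by auto
        show "{s..T} \<subseteq> {0..T}" using s by auto
        fix r assume "r \<in> {s..T}"
        then have "r \<in> {0<..T}" using s s0 by auto
        then show "\<mu> r \<noteq> 0" using mpos by fastforce
      qed
      then have "f integrable_on {s..T}" by (rule integrable_continuous_real)
      then have "\<not> f integrable_on {0..s}"
        using False Henstock_Kurzweil_Integration.integrable_combine[where a=0 and c=s and b=T and f=f] s by auto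
      then show ?thesis unfolding nu N_def by (simp add: not_integrable_integral)
    qed
  qed
  define K where "K = exp (2 * \<mu> T + N) * (1 + exp 1) * (1 + exp (2 * \<mu> T))"
  have "K > 0" unfolding K_def by (intro mult_pos_pos) (auto simp: add_pos_pos)
  moreover have "\<forall>s\<in>{0..T}. \<forall>x\<ge>0.
           psi_fun x (\<mu> s) \<le> phi_fun \<beta> \<gamma> \<mu> s x \<and>
           phi_fun \<beta> \<gamma> \<mu> s x \<le> K * psi_fun x (\<mu> s) + K"
  proof (intro ballI allI impI)
    fix s x :: real assume s: "s \<in> {0..T}" and x: "0 \<le> x"
    note k = key_ineq[OF mnn[OF s] mle[OF s] nunn[OF s] nule[OF s] x]
    show "psi_fun x (\<mu> s) \<le> phi_fun \<beta> \<gamma> \<mu> s x \<and>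
           phi_fun \<beta> \<gamma> \<mu> s x \<le> K * psi_fun x (\<mu> s) + K"
      unfolding psi_fun_def phi_fun_def K_def using k by simp
  qed
  ultimately show ?thesis by blast
qed

end
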